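(* Let $m\geq 13$ and $n\geq 13$ be integers with $m\not\equiv 2\pmod 3$ and $n\not\equiv 2\pmod 3$. Then $\gamma_{sR}(C_m\vee C_n)=3$.
   Context: $C_n$ denotes the cycle on $n$ vertices. For a graph $G=(V,E)$ and $x\in V$, $N_G[x]=\{x\}\cup\{y: xy\in E\}$. A signed Roman dominating function (SRDF) on $G$ is a function $f:V\to\{-1,1,2\}$ such that (a) $\sum_{y\in N_G[x]}f(y)\geq 1$ for every $x\in V$, and (b) every vertex $x$ with $f(x)=-1$ is adjacent to at least one vertex $y$ with $f(y)=2$. The weight of $f$ is $\sum_{x\in V}f(x)$, and $\gamma_{sR}(G)$ is the minimum weight of an SRDF on $G$. The join $G_1\vee G_2$ of two graphs has vertex set $V(G_1)\cup V(G_2)$ (disjoint union) and edge set $E(G_1)\cup E(G_2)\cup\{uv: u\in V(G_1), v\in V(G_2)\}$. *)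

theory Defs
  imports Main
begin

text \<open>A (simple) graph is given by a vertex set V and a symmetric, irreflexive
adjacency relation adj.\<close>

definition closed_nbhd :: "'a set \<Rightarrow> ('a \<Rightarrow> 'a \<Rightarrow> bool) \<Rightarrow> 'a \<Rightarrow> 'a set" where
  "closed_nbhd V adj x = insert x {y \<in> V. adj x y}"

definition is_SRDF :: "'a set \<Rightarrow> ('a \<Rightarrow> 'a \<Rightarrow> bool) \<Rightarrow> ('a \<Rightarrow> int) \<Rightarrow> bool" where
  "is_SRDF V adj f \<longleftrightarrow>
     (\<forall>x\<in>V. f x \<in> {-1, 1, 2}) \<and>
     (\<forall>x\<in>V. (\<Sum>y\<in>closed_nbhd V adj x. f y) \<ge> 1) \<and>
     (\<forall>x\<in>V. f x = -1 \<longrightarrow> (\<exists>y\<in>V. adj x y \<and> f y = 2))"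

definition weight :: "'a set \<Rightarrow> ('a \<Rightarrow> int) \<Rightarrow> int" where
  "weight V f = (\<Sum>x\<in>V. f x)"

text \<open>Signed Roman domination number: minimum weight of an SRDF (V finite).
Functions are only relevant on V; the set of weights is finite and nonempty
(the constant function 1 is an SRDF).\<close>
definition gamma_sR :: "'a set \<Rightarrow> ('a \<Rightarrow> 'a \<Rightarrow> bool) \<Rightarrow> int" where
  "gamma_sR V adj = Min {weight V f | f. is_SRDF V adj f}"

definition cycle_V :: "nat \<Rightarrow> nat set" where
  "cycle_V n = {0..<n}"

definition cycle_adj :: "nat \<Rightarrow> nat \<Rightarrow> nat \<Rightarrow> bool" where
  "cycle_adj n i j \<longleftrightarrow> i < n \<and> j < n \<and> i \<noteq> j \<and> (j = (i + 1) mod n \<or> i = (j + 1) mod n)"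

definition join_V :: "'a set \<Rightarrow> 'b set \<Rightarrow> ('a + 'b) set" where
  "join_V V1 V2 = V1 <+> V2"

fun join_adj :: "('a \<Rightarrow> 'a \<Rightarrow> bool) \<Rightarrow> ('b \<Rightarrow> 'b \<Rightarrow> bool) \<Rightarrow> ('a + 'b) \<Rightarrow> ('a + 'b) \<Rightarrow> bool" where
  "join_adj adj1 adj2 (Inl a) (Inl b) = adj1 a b"
| "join_adj adj1 adj2 (Inr a) (Inr b) = adj2 a b"
| "join_adj adj1 adj2 (Inl a) (Inr b) = True"
| "join_adj adj1 adj2 (Inr a) (Inl b) = True"

end

theory Submission
  imports Defs
begin


lemma mod_succ: "(x::nat) < L \<Longrightarrow> (x+1) mod L = (if x + 1 = L then 0 else x+1)"
proof (cases "x + 1 = L")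
  case True then show ?thesis by simp
next
  case False
  assume "x < L"
  then have "x + 1 < L" using False by simp
  then show ?thesis using False by simp
qed

lemma mod_pred: "(x::nat) < L \<Longrightarrow> (x+L-1) mod L = (if x = 0 then L - 1 else x - 1)"
proof (cases "x = 0")
  case True
  assume "x < L"
  then have "x + L - 1 = L - 1" using True by simp
  then show ?thesis using True \<open>x<L\<close> by simp
next
  case False
  assume "x < L"
  then have "x + L - 1 = (x - 1) + L" using False by auto
  moreover have "(x - 1 + L) mod L = x - 1" using \<open>x<L\<close> by simp
  ultimately show ?thesis using False by simp
qed

lemma cyc_adj_iff: assumes "3 \<le> L" "i < L" shows
   "cycle_adj L i j \<longleftrightarrow> (j = (i+1) mod L \<or> j = (i+L-1) mod L)"
proof -
  have A: "(i+1) mod L = (if i+1 = L then 0 else i+1)" using mod_succ assms by blast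
  have B: "(i+L-1) mod L = (if i = 0 then L-1 else i-1)" using mod_pred assms by blast
  show ?thesis
  proof (cases "j < L")
    case True
    have C: "(j+1) mod L = (if j+1 = L then 0 else j+1)" using mod_succ True by blast
    show ?thesis unfolding cycle_adj_def A B C using assms True by (auto split: if_splits)
  next
    case False
    then show ?thesis unfolding cycle_adj_def A B using assms by auto
  qed
qed

lemma rot:
  fixes g :: "nat \<Rightarrow> int" assumes "0 < m"
  shows "(\<Sum>j<m. g ((k+j) mod m)) = (\<Sum>j<m. g j)"
proof (induction k)
  case 0 then show ?case by simp
next
  case (Suc k)
  have "(\<Sum>j<Suc m. g ((k+j) mod m)) = g (k mod m) + (\<Sum>j<m. g ((k+Suc j) mod m))"
    by (subst sum.lessThan_Suc_shift) simp
  moreover have "(\<Sum>j<Suc m. g ((k+j) mod m)) = (\<Sum>j<m. g ((k+j) mod m)) + g ((k+m) mod m)"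
    by simp
  ultimately have "(\<Sum>j<m. g ((k+Suc j) mod m)) = (\<Sum>j<m. g ((k+j) mod m))" by simp
  then show ?case using Suc by simp
qed

lemma cyc_sum3:
  fixes g :: "nat \<Rightarrow> int" assumes "0 < m"
  shows "(\<Sum>i<m. g((i+m-1) mod m) + g i + g((i+1) mod m)) = 3 * (\<Sum>i<m. g i)"
proof -
  have a: "(\<Sum>i<m. g((i+m-1) mod m)) = (\<Sum>i<m. g i)"
    using rot[OF assms, of g "m-1"] assms by (simp add: add.commute)
  have b: "(\<Sum>i<m. g((i+1) mod m)) = (\<Sum>i<m. g i)"
    using rot[OF assms, of g 1] by (simp add: add.commute)
  show ?thesis using a b by (simp add: sum.distrib)
qed

lemma block:
  fixes G :: "nat \<Rightarrow> int"
  shows "(\<Sum>j<3*t. G(k+j)) = (\<Sum>i<t. G(k+3*i) + G(k+3*i+1) + G(k+3*i+2))"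
proof (induction t)
  case 0 then show ?case by simp
next
  case (Suc t)
  have e: "3 * Suc t = Suc (Suc (Suc (3*t)))" by simp
  show ?case unfolding e using Suc by (simp add: add.assoc)
qed



lemma cyc_main:
  fixes g :: "nat \<Rightarrow> int" and m :: nat
  assumes m13: "13 \<le> m" and mm: "m mod 3 \<noteq> 2"
    and vals: "\<forall>i<m. g i \<in> {-1,1,2}"
    and win: "\<forall>k. g (k mod m) + g ((k+1) mod m) + g ((k+2) mod m) \<ge> 0"
    and S: "(\<Sum>i<m. g i) = 1"
  shows False
proof -
  define G where "G k = g (k mod m)" for k
  define T where "T k = G k + G (k+1) + G (k+2)" for k
  have m0: "0<m" using m13 by simp
  have Gv: "G k \<in> {-1,1,2}" for k unfolding G_def using vals m0 by simp
  have Gp: "G (k+m) = G k" for k unfolding G_def by simp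
  have T0: "T k \<ge> 0" for k unfolding T_def G_def using win by simp
  have R: "(\<Sum>j<m. G (k+j)) = 1" for k unfolding G_def using rot[OF m0, of g k] S by simp
  have B: "(\<Sum>j<3*t. G(k+j)) = (\<Sum>i<t. T (k+3*i))" for t k
    unfolding T_def using block[where G=G and t=t and k=k] by (simp add: add.assoc)
  obtain t where t: "m = 3*t \<or> m = 3*t+1" using mm
    by (metis mod_mult_div_eq mod_less_divisor mult.commute zero_less_numeral
         less_Suc_eq numeral_3_eq_3 One_nat_def numeral_2_eq_2 add.commute less_Suc0 add_0)
  have t4: "t \<ge> 4" using t m13 by auto
  have no2: "False" if h: "\<forall>k. G k \<noteq> 2"
  proof -
    have T1: "T k \<ge> 1" for k using Gv[of k] Gv[of "k+1"] Gv[of "k+2"] T0[of k] h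
      unfolding T_def by auto
    have st: "(\<Sum>i<t. T (0+3*i)) \<ge> int t"
    proof -
      have "(\<Sum>i<t. T (0+3*i)) \<ge> (\<Sum>i<t. (1::int))" by (rule sum_mono) (use T1 in auto)
      then show ?thesis by simp
    qed
    from t show False
    proof
      assume "m = 3*t" then have "(\<Sum>j<3*t. G(0+j)) = 1" using R[of 0] by simp
      moreover have "(\<Sum>j<3*t. G(0+j)) = (\<Sum>i<t. T (0+3*i))" by (rule B)
      ultimately show False using st t4 by linarith
    next
      assume e: "m = 3*t+1"
      have "(\<Sum>j<3*t+1. G(0+j)) = (\<Sum>j<3*t. G(0+j)) + G(3*t)" by simp
      moreover have "G (3*t) \<ge> -1" using Gv[of "3*t"] by auto
      moreover have "(\<Sum>j<3*t. G(0+j)) = (\<Sum>i<t. T (0+3*i))" by (rule B)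
      moreover have "(\<Sum>j<3*t+1. G(0+j)) = 1" using R[of 0] e by simp
      ultimately show False using st t4 by linarith
    qed
  qed
  from t show False
  proof
    assume e: "m = 3*t+1"
    have Gle: "G k \<le> 1" for k
    proof -
      have "(\<Sum>j<3*t+1. G(k+1+j)) = (\<Sum>j<3*t. G(k+1+j)) + G(k+1+3*t)" by simp
      also have "G(k+1+3*t) = G k" using Gp[of k] e by (simp add: add.commute add.left_commute)
      also have "(\<Sum>j<3*t. G(k+1+j)) = (\<Sum>i<t. T (k+1+3*i))" by (rule B)
      also have "\<dots> \<ge> 0" by (rule sum_nonneg) (use T0 in auto)
      ultimately show ?thesis using R[of "k+1"] e by simp
    qed
    have "\<forall>k. G k \<noteq> 2"
    proof
      fix k show "G k \<noteq> 2" using Gle[of k] by simp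
    qed
    then show False using no2 by blast
  next
    assume e: "m = 3*t"
    have Tle: "T k \<le> 1" for k
    proof -
      have "T (k+3*0) \<le> (\<Sum>i<t. T (k+3*i))"
        by (rule member_le_sum[of 0 "{..<t}" "\<lambda>i. T (k+3*i)"]) (use T0 t4 in auto)
      also have "\<dots> = 1" using B[where t=t and k=k] R[of k] e by simp
      finally show ?thesis by simp
    qed
    show False
    proof (cases "\<exists>p. G p = 2")
      case False then show False using no2 by blast
    next
      case True
      then obtain p where p: "G p = 2" by blast
      have step: "G (q+1) = -1 \<and> G (q+2) = -1 \<and> G (q+3) = 2" if "G q = 2" for q
      proof -
        have a: "G (q+1) + G (q+2) \<le> -1" using Tle[of q] that unfolding T_def by simp
        have b: "G (q+1) = -1 \<and> G (q+2) = -1" using a Gv[of "q+1"] Gv[of "q+2"] by auto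
        have "T (q+1) \<ge> 0" by (rule T0)
        then have "G (q+3) \<ge> 2" using b unfolding T_def by (simp add: add.assoc numeral_3_eq_3)
        then show ?thesis using b Gv[of "q+3"] by auto
      qed
      have inv: "G (p+3*i) = 2" for i
      proof (induction i)
        case 0 then show ?case using p by simp
        next
        case (Suc i) then show ?case using step[of "p+3*i"] by (simp add: ac_simps)
      qed
      have "T (p+3*i) = 0" for i using step[OF inv[of i]] inv[of i] unfolding T_def by simp
      then have "(\<Sum>i<t. T (p+3*i)) = 0" by simp
      then show False using B[where t=t and k=p] R[of p] e by simp
    qed
  qed
qed



definition p3 :: "nat \<Rightarrow> int" where "p3 i = (if i mod 3 = 0 then 2 else -1)"
definition Aq :: "nat \<Rightarrow> nat \<Rightarrow> int" where
  "Aq L i = p3 i + (if L mod 3 = 0 \<and> i = 1 then 2 else 0)"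
definition Bq :: "nat \<Rightarrow> nat \<Rightarrow> int" where
  "Bq L i = p3 i + (if L mod 3 = 0 then (if i = 1 then 2 else if i = 3 then -1 else 0)
                    else (if i = 0 then -1 else 0))"

lemma P0: "p3 y + p3 (Suc y) + p3 (Suc (Suc y)) = 0"
proof -
  have "y mod 3 = 0 \<or> y mod 3 = 1 \<or> y mod 3 = 2" by arith
  then show ?thesis unfolding p3_def by (auto simp: mod_Suc)
qed

lemma P1: "0 < x \<Longrightarrow> p3 (x-1) + p3 x + p3 (x+1) = 0"
proof -
  assume "0 < x"
  then obtain y where "x = Suc y" by (cases x) auto
  then show ?thesis using P0[of y] by simp
qed

lemma P2: "L mod 3 = 0 \<Longrightarrow> 2 \<le> L \<Longrightarrow> p3 (L-1) = -1 \<and> p3 (L-2) = -1"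
proof -
  assume a: "L mod 3 = 0" "2 \<le> L"
  then obtain k where k: "L = Suc (Suc k)" by (metis add_2_eq_Suc le_add_diff_inverse)
  have "k mod 3 = 0 \<or> k mod 3 = 1 \<or> k mod 3 = 2" by arith
  then show ?thesis using a k unfolding p3_def by (auto simp: mod_Suc)
qed

lemma P3: "L mod 3 = 1 \<Longrightarrow> 2 \<le> L \<Longrightarrow> p3 (L-1) = 2 \<and> p3 (L-2) = -1"
proof -
  assume a: "L mod 3 = 1" "2 \<le> L"
  then obtain k where k: "L = Suc (Suc k)" by (metis add_2_eq_Suc le_add_diff_inverse)
  have "k mod 3 = 0 \<or> k mod 3 = 1 \<or> k mod 3 = 2" by arith
  then show ?thesis using a k unfolding p3_def by (auto simp: mod_Suc)
qed

lemma p3_0: "p3 0 = 2" and p3_1: "p3 1 = -1" by (simp_all add: p3_def)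

lemma winA: assumes "x < L" "13 \<le> L" "L mod 3 \<noteq> 2"
  shows "Aq L ((x+L-1) mod L) + Aq L x + Aq L ((x+1) mod L) \<ge> 0"
proof -
  have L: "L mod 3 = 0 \<or> L mod 3 = 1" using assms by auto
  have "Aq L (if x = 0 then L - 1 else x - 1) + Aq L x + Aq L (if x + 1 = L then 0 else x+1) \<ge> 0"
  proof (cases "x = 0")
    case True then show ?thesis using assms L P2[of L] P3[of L] p3_0 p3_1 unfolding Aq_def by auto
  next
    case False
    show ?thesis
    proof (cases "x + 1 = L")
      case True
      then have "x = L - 1" by simp
      moreover have "L - 1 - 1 = L - 2" by simp
      ultimately show ?thesis using assms L P2[of L] P3[of L] p3_0 p3_1 unfolding Aq_def by auto
    next
      case F2: False
      then show ?thesis using assms False F2 P1[of x] unfolding Aq_def by auto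
    qed
  qed
  then show ?thesis using mod_succ[OF assms(1)] mod_pred[OF assms(1)] by simp
qed

lemma winB: assumes "x < L" "13 \<le> L" "L mod 3 \<noteq> 2"
  shows "Bq L ((x+L-1) mod L) + Bq L x + Bq L ((x+1) mod L) \<ge> -1"
proof -
  have L: "L mod 3 = 0 \<or> L mod 3 = 1" using assms by auto
  have "Bq L (if x = 0 then L - 1 else x - 1) + Bq L x + Bq L (if x + 1 = L then 0 else x+1) \<ge> -1"
  proof (cases "x = 0")
    case True then show ?thesis using assms L P2[of L] P3[of L] p3_0 p3_1 unfolding Bq_def by auto
  next
    case False
    show ?thesis
    proof (cases "x + 1 = L")
      case True
      then have "x = L - 1" by simp
      moreover have "L - 1 - 1 = L - 2" by simp
      ultimately show ?thesis using assms L P2[of L] P3[of L] p3_0 p3_1 unfolding Bq_def by auto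
    next
      case F2: False
      then show ?thesis using assms False F2 P1[of x] unfolding Bq_def by auto
    qed
  qed
  then show ?thesis using mod_succ[OF assms(1)] mod_pred[OF assms(1)] by simp
qed



lemma sum_p3: assumes "L mod 3 \<noteq> 2" shows "(\<Sum>i<L. p3 i) = (if L mod 3 = 0 then 0 else 2)"
proof -
  obtain t where t: "L = 3*t \<or> L = 3*t+1" using assms
    by (metis mod_mult_div_eq mod_less_divisor mult.commute zero_less_numeral
         less_Suc_eq numeral_3_eq_3 One_nat_def numeral_2_eq_2 add.commute less_Suc0 add_0)
  have z: "(\<Sum>j<3*t. p3 (0+j)) = 0"
    using block[where G=p3 and t=t and k=0] P0 by (simp add: add.assoc)
  have p3t: "p3 (3*t) = 2" by (simp add: p3_def)
  from t show ?thesis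
  proof
    assume "L = 3*t" then show ?thesis using z by simp
  next
    assume "L = 3*t+1" then show ?thesis using z p3t by simp
  qed
qed

lemma sumA: assumes "13 \<le> L" "L mod 3 \<noteq> 2" shows "(\<Sum>i<L. Aq L i) = 2"
proof -
  have "(\<Sum>i<L. Aq L i) = (\<Sum>i<L. p3 i) + (\<Sum>i<L. (if L mod 3 = 0 \<and> i = 1 then 2 else 0))"
    unfolding Aq_def by (rule sum.distrib)
  also have "(\<Sum>i<L. (if L mod 3 = 0 \<and> i = 1 then 2 else 0)::int) = (if L mod 3 = 0 then 2 else 0)"
    using assms by (cases "L mod 3 = 0") simp_all
  finally show ?thesis using sum_p3[OF assms(2)] by simp
qed

lemma sumB: assumes "13 \<le> L" "L mod 3 \<noteq> 2" shows "(\<Sum>i<L. Bq L i) = 1"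
proof (cases "L mod 3 = 0")
  case True
  have e: "Bq L i = p3 i + ((if i = 1 then 2 else 0) + (if i = 3 then -1 else 0))" for i
    unfolding Bq_def using True by auto
  have "(\<Sum>i<L. Bq L i) = (\<Sum>i<L. p3 i) + ((\<Sum>i<L. (if i = 1 then 2 else 0)) + (\<Sum>i<L. (if i = 3 then -1 else 0)))"
    unfolding e by (simp add: sum.distrib)
  then show ?thesis using sum_p3[OF assms(2)] True assms by simp
next
  case False
  have e: "Bq L i = p3 i + (if i = 0 then -1 else 0)" for i
    unfolding Bq_def using False by auto
  have "(\<Sum>i<L. Bq L i) = (\<Sum>i<L. p3 i) + (\<Sum>i<L. (if i = 0 then -1 else 0))"
    unfolding e by (simp add: sum.distrib)
  then show ?thesis using sum_p3[OF assms(2)] False assms by simp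
qed

lemma valsA: "Aq L i \<in> {-1,1,2}" unfolding Aq_def p3_def by auto
lemma valsB: "Bq L i \<in> {-1,1,2}" unfolding Bq_def p3_def by auto
lemma six: "Aq L 6 = 2" "Bq L 6 = 2" unfolding Aq_def Bq_def p3_def by auto



lemma V_eq: "join_V (cycle_V m) (cycle_V n) = Inl ` {..<m} \<union> Inr ` {..<n}"
  unfolding join_V_def cycle_V_def Plus_def by (simp add: atLeast0LessThan)

lemma weight_split:
  "weight (join_V (cycle_V m) (cycle_V n)) f = (\<Sum>i<m. f (Inl i)) + (\<Sum>j<n. f (Inr j))"
  unfolding weight_def V_eq
  by (subst sum.union_disjoint) (auto simp: sum.reindex)

lemma three_distinct: assumes "3 \<le> (m::nat)" "i < m"
  shows "(i+m-1) mod m \<noteq> i" "(i+m-1) mod m \<noteq> (i+1) mod m" "i \<noteq> (i+1) mod m"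
  using mod_succ[OF assms(2)] mod_pred[OF assms(2)] assms by auto

lemma nb_Inl: assumes "3 \<le> m" "i < m"
  shows "(\<Sum>y\<in>closed_nbhd (join_V (cycle_V m) (cycle_V n)) (join_adj (cycle_adj m) (cycle_adj n)) (Inl i). f y)
     = f (Inl ((i+m-1) mod m)) + f (Inl i) + f (Inl ((i+1) mod m)) + (\<Sum>j<n. f (Inr j))"
proof -
  have lt: "(i+m-1) mod m < m" "(i+1) mod m < m" using assms by auto
  have s: "closed_nbhd (join_V (cycle_V m) (cycle_V n)) (join_adj (cycle_adj m) (cycle_adj n)) (Inl i)
     = Inl ` {(i+m-1) mod m, i, (i+1) mod m} \<union> Inr ` {..<n}"
  proof (rule set_eqI)
    fix y show "y \<in> closed_nbhd (join_V (cycle_V m) (cycle_V n)) (join_adj (cycle_adj m) (cycle_adj n)) (Inl i)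
      \<longleftrightarrow> y \<in> Inl ` {(i+m-1) mod m, i, (i+1) mod m} \<union> Inr ` {..<n}"
      using lt assms cyc_adj_iff[OF assms]
      by (cases y) (auto simp: closed_nbhd_def V_eq)
  qed
  show ?thesis unfolding s
    using three_distinct[OF assms]
    by (subst sum.union_disjoint) (auto simp: sum.reindex add.assoc)
qed

lemma nb_Inr: assumes "3 \<le> n" "i < n"
  shows "(\<Sum>y\<in>closed_nbhd (join_V (cycle_V m) (cycle_V n)) (join_adj (cycle_adj m) (cycle_adj n)) (Inr i). f y)
     = f (Inr ((i+n-1) mod n)) + f (Inr i) + f (Inr ((i+1) mod n)) + (\<Sum>j<m. f (Inl j))"
proof -
  have lt: "(i+n-1) mod n < n" "(i+1) mod n < n" using assms by auto
  have s: "closed_nbhd (join_V (cycle_V m) (cycle_V n)) (join_adj (cycle_adj m) (cycle_adj n)) (Inr i)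
     = Inr ` {(i+n-1) mod n, i, (i+1) mod n} \<union> Inl ` {..<m}"
  proof (rule set_eqI)
    fix y show "y \<in> closed_nbhd (join_V (cycle_V m) (cycle_V n)) (join_adj (cycle_adj m) (cycle_adj n)) (Inr i)
      \<longleftrightarrow> y \<in> Inr ` {(i+n-1) mod n, i, (i+1) mod n} \<union> Inl ` {..<m}"
      using lt assms cyc_adj_iff[OF assms]
      by (cases y) (auto simp: closed_nbhd_def V_eq)
  qed
  show ?thesis unfolding s
    using three_distinct[OF assms]
    by (subst sum.union_disjoint) (auto simp: sum.reindex add.assoc)
qed



lemma mod_id1: "0 < (m::nat) \<Longrightarrow> ((k+1) mod m + m - 1) mod m = k mod m"
proof -
  assume m: "0 < m"
  have "(k+1) mod m + m - 1 = (k+1) mod m + (m-1)" using m by simp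
  then have "((k+1) mod m + m - 1) mod m = ((k+1) + (m-1)) mod m" by (simp add: mod_add_left_eq)
  also have "(k+1) + (m-1) = k + m" using m by simp
  finally show ?thesis by simp
qed

lemma mod_id2: "((k+1) mod (m::nat) + 1) mod m = (k+2) mod m"
  by (metis Suc_1 add_Suc_right mod_Suc_eq Suc_eq_plus1)

lemma lower:
  fixes m n :: nat and f :: "nat + nat \<Rightarrow> int"
  assumes "m \<ge> 13" and "n \<ge> 13" and mm: "m mod 3 \<noteq> 2"
    and sr: "is_SRDF (join_V (cycle_V m) (cycle_V n)) (join_adj (cycle_adj m) (cycle_adj n)) f"
  shows "weight (join_V (cycle_V m) (cycle_V n)) f \<ge> 3"
proof (rule ccontr)
  assume neg: "\<not> ?thesis"
  define g where "g i = f (Inl i)" for i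
  define h where "h j = f (Inr j)" for j
  define S1 where "S1 = (\<Sum>i<m. g i)"
  define S2 where "S2 = (\<Sum>j<n. h j)"
  have wt: "S1 + S2 \<le> 2" using neg weight_split[of m n f] unfolding S1_def S2_def g_def h_def by simp
  have m3: "3 \<le> m" "0 < m" and n3: "3 \<le> n" "0 < n" using assms by auto
  have Wm: "g((i+m-1) mod m) + g i + g((i+1) mod m) + S2 \<ge> 1" if "i < m" for i
  proof -
    have "Inl i \<in> join_V (cycle_V m) (cycle_V n)" using that by (simp add: V_eq)
    then show ?thesis using sr nb_Inl[OF m3(1) that, where n=n and f=f] unfolding is_SRDF_def g_def S2_def h_def
      by auto
  qed
  have Wn: "h((i+n-1) mod n) + h i + h((i+1) mod n) + S1 \<ge> 1" if "i < n" for i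
  proof -
    have "Inr i \<in> join_V (cycle_V m) (cycle_V n)" using that by (simp add: V_eq)
    then show ?thesis using sr nb_Inr[OF n3(1) that, where m=m and f=f] unfolding is_SRDF_def h_def S1_def g_def
      by auto
  qed
  have Im: "3 * S1 \<ge> int m * (1 - S2)"
  proof -
    have "(\<Sum>i<m. (1 - S2)) \<le> (\<Sum>i<m. g((i+m-1) mod m) + g i + g((i+1) mod m))"
      by (rule sum_mono) (use Wm in force)
    then show ?thesis using cyc_sum3[OF m3(2), of g] unfolding S1_def by simp
  qed
  have In: "3 * S2 \<ge> int n * (1 - S1)"
  proof -
    have "(\<Sum>i<n. (1 - S1)) \<le> (\<Sum>i<n. h((i+n-1) mod n) + h i + h((i+1) mod n))"
      by (rule sum_mono) (use Wn in force)
    then show ?thesis using cyc_sum3[OF n3(2), of h] unfolding S2_def by simp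
  qed
  have c1: "1 - S2 \<le> 0"
  proof (rule ccontr)
    assume "\<not> 1 - S2 \<le> 0"
    then have "int m * (1 - S2) \<ge> 13 * (1 - S2)" using assms(1) by (intro mult_right_mono) auto
    then show False using Im wt \<open>\<not> 1 - S2 \<le> 0\<close> by (smt (verit))
  qed
  have c2: "1 - S1 \<le> 0"
  proof (rule ccontr)
    assume "\<not> 1 - S1 \<le> 0"
    then have "int n * (1 - S1) \<ge> 13 * (1 - S1)" using assms(2) by (intro mult_right_mono) auto
    then show False using In wt \<open>\<not> 1 - S1 \<le> 0\<close> by (smt (verit))
  qed
  have S1v: "S1 = 1" and S2v: "S2 = 1" using c1 c2 wt by linarith+
  have vals: "\<forall>i<m. g i \<in> {-1,1,2}"
  proof (intro allI impI)
    fix i assume "i < m"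
    then have "Inl i \<in> join_V (cycle_V m) (cycle_V n)" by (simp add: V_eq)
    then show "g i \<in> {-1,1,2}" using sr unfolding is_SRDF_def g_def by blast
  qed
  have win: "\<forall>k. g (k mod m) + g ((k+1) mod m) + g ((k+2) mod m) \<ge> 0"
  proof
    fix k
    have "(k+1) mod m < m" using m3 by simp
    from Wm[OF this] show "g (k mod m) + g ((k+1) mod m) + g ((k+2) mod m) \<ge> 0"
      using mod_id1[OF m3(2), of k] mod_id2[of k m] S2v by simp
  qed
  show False using cyc_main[OF assms(1) mm vals win] S1v unfolding S1_def by simp
qed



theorem mainTheorem11:
  fixes m n :: nat
  assumes "m \<ge> 13" and "n \<ge> 13" and "m mod 3 \<noteq> 2" and "n mod 3 \<noteq> 2"
  shows "gamma_sR (join_V (cycle_V m) (cycle_V n)) (join_adj (cycle_adj m) (cycle_adj n)) = 3"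
proof -
  define V where "V = join_V (cycle_V m) (cycle_V n)"
  define adj where "adj = join_adj (cycle_adj m) (cycle_adj n)"
  define f0 :: "nat + nat \<Rightarrow> int" where "f0 = case_sum (Aq m) (Bq n)"
  have m3: "3 \<le> m" and n3: "3 \<le> n" using assms by auto
  have sA: "(\<Sum>i<m. f0 (Inl i)) = 2" using sumA[OF assms(1,3)] by (simp add: f0_def)
  have sB: "(\<Sum>j<n. f0 (Inr j)) = 1" using sumB[OF assms(2,4)] by (simp add: f0_def)
  have srdf0: "is_SRDF V adj f0"
    unfolding is_SRDF_def
  proof (intro conjI ballI impI)
    fix x assume "x \<in> V"
    then show "f0 x \<in> {-1,1,2}" using valsA[of m] valsB[of n] by (cases x) (simp_all add: f0_def)
  next
    fix x assume xV: "x \<in> V"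
    show "(\<Sum>y\<in>closed_nbhd V adj x. f0 y) \<ge> 1"
    proof (cases x)
      case (Inl i)
      then have i: "i < m" using xV by (auto simp: V_def V_eq)
      show ?thesis unfolding Inl V_def adj_def nb_Inl[OF m3 i] sB
        using winA[OF i assms(1,3)] by (simp add: f0_def)
    next
      case (Inr i)
      then have i: "i < n" using xV by (auto simp: V_def V_eq)
      show ?thesis unfolding Inr V_def adj_def nb_Inr[OF n3 i] sA
        using winB[OF i assms(2,4)] by (simp add: f0_def)
    qed
  next
    fix x assume xV: "x \<in> V" and "f0 x = -1"
    show "\<exists>y\<in>V. adj x y \<and> f0 y = 2"
    proof (cases x)
      case (Inl i)
      have "Inr 6 \<in> V" using assms(2) by (simp add: V_def V_eq)
      moreover have "adj x (Inr 6) \<and> f0 (Inr 6) = 2" using Inl six by (simp add: adj_def f0_def)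
      ultimately show ?thesis by blast
    next
      case (Inr i)
      have "Inl 6 \<in> V" using assms(1) by (simp add: V_def V_eq)
      moreover have "adj x (Inl 6) \<and> f0 (Inl 6) = 2" using Inr six by (simp add: adj_def f0_def)
      ultimately show ?thesis by blast
    qed
  qed
  have w0: "weight V f0 = 3" unfolding V_def weight_split sA sB by simp
  define W where "W = {weight V f | f. is_SRDF V adj f}"
  have low: "\<forall>w\<in>W. 3 \<le> w"
    using lower[OF assms(1,2,3)] unfolding W_def V_def adj_def by blast
  have up: "\<forall>w\<in>W. w \<le> 2 * int m + 2 * int n"
  proof
    fix w assume "w \<in> W"
    then obtain f where w: "w = weight V f" and sf: "is_SRDF V adj f" unfolding W_def by blast
    have "(\<Sum>i<m. f (Inl i)) \<le> of_nat (card {..<m}) * 2"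
    proof (rule sum_bounded_above)
      fix i assume "i \<in> {..<m}"
      then have "Inl i \<in> V" by (simp add: V_def V_eq)
      then show "f (Inl i) \<le> 2" using sf unfolding is_SRDF_def by auto
    qed
    moreover have "(\<Sum>j<n. f (Inr j)) \<le> of_nat (card {..<n}) * 2"
    proof (rule sum_bounded_above)
      fix i assume "i \<in> {..<n}"
      then have "Inr i \<in> V" by (simp add: V_def V_eq)
      then show "f (Inr i) \<le> 2" using sf unfolding is_SRDF_def by auto
    qed
    ultimately show "w \<le> 2 * int m + 2 * int n" unfolding w V_def weight_split by simp
  qed
  have fin: "finite W"
    by (rule finite_subset[of _ "{3 .. 2 * int m + 2 * int n}"]) (use low up in auto)
  have "Min W = 3"
    by (rule Min_eqI) (use fin low srdf0 w0 in \<open>auto simp: W_def\<close>)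
  then show ?thesis unfolding gamma_sR_def W_def V_def adj_def .
qed

end
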